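(* Let $\lambda_1,\lambda_2$ and $H$ be as in the context. For every $c>0$ there exists a unique $\widetilde{\theta_c}\in(0,\frac{\pi}{2})\cap(0,\theta_c^+)$ such that $H(c,\widetilde{\theta_c})=0$.
   Context: Either $\lambda_1>\lambda_2>0$ or $\lambda_1=\lambda_2=1$. For $c>0$ put $\theta_c^+=\pi$ if $c>\sqrt2\lambda_1$ and $\theta_c^+=\arccos(1-c^2/\lambda_1^2)$ if $0<c\le\sqrt2\lambda_1$; $\Omega=\{(c,\theta): c>0,\ |\theta|<\theta_c^+\}$. For $(c,\theta)\in\Omega$: $D=\sin\theta/c$; $\varphi$ is the global solution of $\varphi'(u)=\sqrt{c^2+2\cos\theta\,B(u)-D^2B(u)^2}$, $\varphi(0)=0$, where $B(u)=\lambda_1^2\cos^2\varphi(u)+\lambda_2^2\sin^2\varphi(u)$; $U>0$ is the unique number with $\varphi(U)=\pi$; $f$ solves $f'(u)=DB(u)$, $f(0)=0$; $G(u)=\int_0^u\frac{c-\varphi'(s)}{B(s)}ds$; and $H(c,\theta)=Df(U)+cG(U)$. *)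

theory Defs
  imports "HOL-Analysis.Analysis"
begin

definition theta_plus :: "real \<Rightarrow> real \<Rightarrow> real" where
  "theta_plus l1 c = (if c > sqrt 2 * l1 then pi else arccos (1 - c\<^sup>2 / l1\<^sup>2))"

definition Omega :: "real \<Rightarrow> (real \<times> real) set" where
  "Omega l1 = {(c, \<theta>). c > 0 \<and> \<bar>\<theta>\<bar> < theta_plus l1 c}"

definition Dco :: "real \<Rightarrow> real \<Rightarrow> real" where
  "Dco c \<theta> = sin \<theta> / c"

definition Bang :: "real \<Rightarrow> real \<Rightarrow> real \<Rightarrow> real" where
  "Bang l1 l2 x = l1\<^sup>2 * (cos x)\<^sup>2 + l2\<^sup>2 * (sin x)\<^sup>2"

definition phiRHS :: "real \<Rightarrow> real \<Rightarrow> real \<Rightarrow> real \<Rightarrow> real \<Rightarrow> real" where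
  "phiRHS l1 l2 c \<theta> x =
     sqrt (c\<^sup>2 + 2 * cos \<theta> * Bang l1 l2 x - (Dco c \<theta>)\<^sup>2 * (Bang l1 l2 x)\<^sup>2)"

definition phi :: "real \<Rightarrow> real \<Rightarrow> real \<Rightarrow> real \<Rightarrow> real \<Rightarrow> real" where
  "phi l1 l2 c \<theta> = (THE \<phi>. \<phi> 0 = 0 \<and>
      (\<forall>u. (\<phi> has_real_derivative phiRHS l1 l2 c \<theta> (\<phi> u)) (at u)))"

definition Bfun :: "real \<Rightarrow> real \<Rightarrow> real \<Rightarrow> real \<Rightarrow> real \<Rightarrow> real" where
  "Bfun l1 l2 c \<theta> u = Bang l1 l2 (phi l1 l2 c \<theta> u)"

definition Uend :: "real \<Rightarrow> real \<Rightarrow> real \<Rightarrow> real \<Rightarrow> real" where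
  "Uend l1 l2 c \<theta> = (THE U. U > 0 \<and> phi l1 l2 c \<theta> U = pi)"

definition ffun :: "real \<Rightarrow> real \<Rightarrow> real \<Rightarrow> real \<Rightarrow> real \<Rightarrow> real" where
  "ffun l1 l2 c \<theta> = (THE f. f 0 = 0 \<and>
      (\<forall>u. (f has_real_derivative Dco c \<theta> * Bfun l1 l2 c \<theta> u) (at u)))"

definition Gfun :: "real \<Rightarrow> real \<Rightarrow> real \<Rightarrow> real \<Rightarrow> real \<Rightarrow> real" where
  "Gfun l1 l2 c \<theta> u = integral {0..u}
      (\<lambda>s. (c - deriv (phi l1 l2 c \<theta>) s) / Bfun l1 l2 c \<theta> s)"

definition Hfun :: "real \<Rightarrow> real \<Rightarrow> real \<Rightarrow> real \<Rightarrow> real" where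
  "Hfun l1 l2 c \<theta> = Dco c \<theta> * ffun l1 l2 c \<theta> (Uend l1 l2 c \<theta>)
      + c * Gfun l1 l2 c \<theta> (Uend l1 l2 c \<theta>)"

end

theory Submission
  imports Defs
begin

lemma global_antideriv:
  fixes g :: "real \<Rightarrow> real"
  assumes cont: "continuous_on UNIV g"
  shows "\<exists>G. G 0 = 0 \<and> (\<forall>x. (G has_real_derivative g x) (at x))"
proof -
  define G where "G u = integral {0..u} g - integral {u..0} g" for u
  have int: "g integrable_on {p..q}" for p q
    by (rule integrable_continuous_real) (rule continuous_on_subset[OF cont], simp)
  have z: "integral {p..q} g = 0" if "q \<le> p" for p q
    using that by (cases "q < p") auto
  have shift: "G u = G a + integral {a..u} g" if "a \<le> u" for a u
  proof (cases "0 \<le> a")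
    case True
    then show ?thesis using that Henstock_Kurzweil_Integration.integral_combine[OF True that int[of 0 u]]
      z[of 0 u] z[of 0 a] by (simp add: G_def)
  next
    case False
    show ?thesis
    proof (cases "0 \<le> u")
      case True
      then show ?thesis using False Henstock_Kurzweil_Integration.integral_combine[of a 0 u g] int[of a u]
        z[of 0 u] z[of a 0] by (simp add: G_def)
    next
      case F2: False
      then show ?thesis using False that Henstock_Kurzweil_Integration.integral_combine[of a u 0 g] int[of a 0]
        z[of u 0] z[of a 0] by (simp add: G_def)
    qed
  qed
  have "(G has_real_derivative g x) (at x)" for x
  proof -
    have d: "((\<lambda>u. G (x-1) + integral {x-1..u} g) has_real_derivative g x) (at x within {x-1..x+1})"
      by (intro derivative_eq_intros integral_has_real_derivative continuous_on_subset[OF cont])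
         (auto intro!: integral_has_real_derivative continuous_on_subset[OF cont])
    have d2: "((\<lambda>u. G (x-1) + integral {x-1..u} g) has_real_derivative g x) (at x)"
      using d by (subst (asm) at_within_interior[of x]) auto
    show ?thesis
      by (rule has_field_derivative_transform_within_open[OF d2, of "{x-1<..<x+1}"]) (auto simp: shift[symmetric])
  qed
  moreover have "G 0 = 0" by (simp add: G_def)
  ultimately show ?thesis by blast
qed

lemma ode_solve:
  fixes F :: "real \<Rightarrow> real" and m M :: real
  assumes cont: "continuous_on UNIV F" and m: "0 < m" "\<And>x. m \<le> F x"
    and M: "\<And>x. F x \<le> M"
  obtains T \<phi> where "T 0 = 0" "\<And>x. (T has_real_derivative 1 / F x) (at x)"
    "\<And>x. \<phi> (T x) = x" "\<And>u. T (\<phi> u) = u"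
    "\<And>u. (\<phi> has_real_derivative F (\<phi> u)) (at u)"
    "\<And>\<psi>. \<psi> 0 = 0 \<Longrightarrow> (\<forall>u. (\<psi> has_real_derivative F (\<psi> u)) (at u)) \<Longrightarrow> \<psi> = \<phi>"
    "strict_mono T"
proof -
  have Fpos: "F x > 0" for x using m(1) m(2)[of x] by linarith
  have Mpos: "M > 0" using Fpos[of 0] M[of 0] by linarith
  have "continuous_on UNIV (\<lambda>x. 1 / F x)"
    by (intro continuous_intros cont) (use Fpos in \<open>auto simp: less_imp_neq[symmetric]\<close>)
  then obtain T where T0: "T 0 = 0" and dT: "\<And>x. (T has_real_derivative 1 / F x) (at x)"
    using global_antideriv by blast
  have contT: "isCont T x" for x using dT DERIV_isCont by blast
  have smT: "strict_mono T"
  proof (rule strict_monoI)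
    fix x y :: real assume "x < y"
    show "T x < T y"
      by (rule DERIV_pos_imp_increasing[OF \<open>x < y\<close>]) (use dT Fpos in \<open>auto intro!: exI[of _ "1 / F _"]\<close>)
  qed
  have lowT: "T x \<ge> x / M" if xp: "x > 0" for x
  proof -
    obtain z where "0 < z" "z < x" "T x - T 0 = (x - 0) * (1 / F z)"
      using MVT2[OF xp, of T "\<lambda>x. 1 / F x"] dT by blast
    moreover have "x / M \<le> x * (1 / F z)"
      using xp Fpos[of z] M[of z] by (simp add: divide_simps)
    ultimately show ?thesis using T0 by simp
  qed
  have upT: "T x \<le> x / M" if xp: "x < 0" for x
  proof -
    obtain z where "x < z" "z < 0" "T 0 - T x = (0 - x) * (1 / F z)"
      using MVT2[OF xp, of T "\<lambda>x. 1 / F x"] dT by blast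
    moreover have "(-x) / M \<le> (-x) * (1 / F z)"
      using xp Fpos[of z] M[of z] by (simp add: divide_simps)
    ultimately show ?thesis using T0 by (simp add: field_simps)
  qed
  have surj: "\<exists>x. T x = y" for y
  proof (cases "y \<ge> 0")
    case True
    show ?thesis
    proof (cases "y = 0")
      case True then show ?thesis using T0 by auto
    next
      case False
      then have "y > 0" using True by simp
      then have "y \<le> T (M * y)" using lowT[of "M*y"] Mpos by simp
      then show ?thesis using IVT[of T 0 y "M*y"] T0 True Mpos contT by auto
    qed
  next
    case False
    then have "T (M * y) \<le> y" using upT[of "M*y"] Mpos by (simp add: mult_pos_neg)
    then show ?thesis using IVT[of T "M*y" y 0] T0 False Mpos contT
      by (auto simp: mult_pos_neg less_imp_le)
  qed
  define \<phi> where "\<phi> u = (THE x. T x = u)" for u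
  have injT: "inj T" using smT strict_mono_imp_inj_on by blast
  have TP: "T (\<phi> u) = u" for u
    unfolding \<phi>_def by (rule theI') (use surj injT in \<open>auto dest: injD\<close>)
  have PT: "\<phi> (T x) = x" for x
    unfolding \<phi>_def by (rule the_equality) (use injT in \<open>auto dest: injD\<close>)
  have dP: "(\<phi> has_real_derivative F (\<phi> u)) (at u)" for u
  proof -
    have c: "isCont \<phi> u"
      using isCont_inverse_function[where d=1 and x="\<phi> u" and g=\<phi> and f=T] PT contT TP by auto
    have "(\<phi> has_real_derivative inverse (1 / F (\<phi> u))) (at u)"
      by (rule DERIV_inverse_function[where f=T and g=\<phi> and x=u and a="u - 1" and b="u + 1"])
        (use dT Fpos[of "\<phi> u"] TP c in auto)
    then show ?thesis by simp
  qed
  have uniq: "\<psi> = \<phi>" if "\<psi> 0 = 0" "\<forall>u. (\<psi> has_real_derivative F (\<psi> u)) (at u)" for \<psi>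
  proof
    fix u
    have "\<forall>x. ((\<lambda>u. T (\<psi> u) - u) has_real_derivative 0) (at x)"
    proof
      fix x
      have "((\<lambda>u. T (\<psi> u) - u) has_real_derivative 1 / F (\<psi> x) * F (\<psi> x) - 1) (at x)"
      proof -
        have "((\<lambda>u. T (\<psi> u)) has_real_derivative 1 / F (\<psi> x) * F (\<psi> x)) (at x)"
          by (rule DERIV_chain2[OF dT that(2)[rule_format]])
        then show ?thesis by (intro derivative_eq_intros) auto
      qed
      then show "((\<lambda>u. T (\<psi> u) - u) has_real_derivative 0) (at x)"
        using Fpos[of "\<psi> x"] by simp
    qed
    then have "T (\<psi> u) - u = T (\<psi> 0) - 0" by (rule DERIV_isconst_all)
    then have "T (\<psi> u) = u" using that T0 by simp
    then show "\<psi> u = \<phi> u" using PT by metis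
  qed
  show ?thesis using that T0 dT PT TP dP uniq smT by blast
qed

lemma ftc_real:
  fixes P p :: "real \<Rightarrow> real"
  assumes "a \<le> b" "\<And>x. (P has_real_derivative p x) (at x)"
  shows "integral {a..b} p = P b - P a"
proof -
  have "(p has_integral (P b - P a)) {a..b}"
    by (rule fundamental_theorem_of_calculus[OF assms(1)])
      (use assms(2) in \<open>auto simp: has_real_derivative_iff_has_vector_derivative[symmetric]
          intro: has_field_derivative_at_within\<close>)
  then show ?thesis by (rule integral_unique)
qed

definition Qf :: "real \<Rightarrow> real \<Rightarrow> real \<Rightarrow> real" where
  "Qf c \<theta> B = c\<^sup>2 + 2 * cos \<theta> * B - (Dco c \<theta>)\<^sup>2 * B\<^sup>2"

definition hh :: "real \<Rightarrow> real \<Rightarrow> real \<Rightarrow> real \<Rightarrow> real \<Rightarrow> real" where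
  "hh l1 l2 c \<theta> x = Dco c \<theta> * (Dco c \<theta> * (Bang l1 l2 x / phiRHS l1 l2 c \<theta> x))
     + c * ((c - phiRHS l1 l2 c \<theta> x) / Bang l1 l2 x / phiRHS l1 l2 c \<theta> x)"

lemma phiRHS_Qf: "phiRHS l1 l2 c \<theta> x = sqrt (Qf c \<theta> (Bang l1 l2 x))"
  by (simp add: phiRHS_def Qf_def)

lemma Bang_bounds:
  assumes "0 < l2" "l2 \<le> l1"
  shows "l2\<^sup>2 \<le> Bang l1 l2 x" "Bang l1 l2 x \<le> l1\<^sup>2"
proof -
  have e: "Bang l1 l2 x = l1\<^sup>2 - (l1\<^sup>2 - l2\<^sup>2) * (sin x)\<^sup>2"
    by (simp add: Bang_def cos_squared_eq algebra_simps)
  have e2: "Bang l1 l2 x = l2\<^sup>2 + (l1\<^sup>2 - l2\<^sup>2) * (cos x)\<^sup>2"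
    by (simp add: Bang_def sin_squared_eq algebra_simps)
  have ll: "l2\<^sup>2 \<le> l1\<^sup>2" using assms by (simp add: power_mono)
  show "l2\<^sup>2 \<le> Bang l1 l2 x" "Bang l1 l2 x \<le> l1\<^sup>2"
  proof -
    have "(l1\<^sup>2 - l2\<^sup>2) * (sin x)\<^sup>2 \<ge> 0" "(l1\<^sup>2 - l2\<^sup>2) * (cos x)\<^sup>2 \<ge> 0"
      using ll by auto
    then show "l2\<^sup>2 \<le> Bang l1 l2 x" "Bang l1 l2 x \<le> l1\<^sup>2" using e e2 by linarith+
  qed
qed

lemma Qf_lower:
  assumes "0 < c" "0 < a" "0 \<le> B" "B \<le> a"
  shows "Qf c \<theta> B \<ge> min (c\<^sup>2) (Qf c \<theta> a)"
proof -
  define t where "t = B / a"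
  have t: "0 \<le> t" "t \<le> 1" using assms unfolding t_def by (simp_all add: divide_simps)
  have "Qf c \<theta> B - ((1 - t) * c\<^sup>2 + t * Qf c \<theta> a) = (Dco c \<theta>)\<^sup>2 * B * (a - B)"
  proof -
    have ta: "t * a = B" using assms by (simp add: t_def)
    have "(1 - t) * c\<^sup>2 + t * Qf c \<theta> a = c\<^sup>2 + 2 * cos \<theta> * (t * a) - (Dco c \<theta>)\<^sup>2 * a * (t * a)"
      unfolding Qf_def by (simp add: power2_eq_square right_diff_distrib left_diff_distrib distrib_left mult.assoc mult.left_commute)
    then show ?thesis unfolding ta Qf_def by (simp add: power2_eq_square right_diff_distrib)
  qed
  moreover have "(Dco c \<theta>)\<^sup>2 * B * (a - B) \<ge> 0" using assms by simp
  moreover have "(1 - t) * c\<^sup>2 + t * Qf c \<theta> a \<ge> (1 - t) * min (c\<^sup>2) (Qf c \<theta> a) + t * min (c\<^sup>2) (Qf c \<theta> a)"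
  proof (rule add_mono)
    show "(1 - t) * min (c\<^sup>2) (Qf c \<theta> a) \<le> (1 - t) * c\<^sup>2" by (rule mult_left_mono) (use t in auto)
    show "t * min (c\<^sup>2) (Qf c \<theta> a) \<le> t * Qf c \<theta> a" by (rule mult_left_mono) (use t in auto)
  qed
  moreover have "(1 - t) * min (c\<^sup>2) (Qf c \<theta> a) + t * min (c\<^sup>2) (Qf c \<theta> a) = min (c\<^sup>2) (Qf c \<theta> a)"
    by (simp add: algebra_simps)
  ultimately show ?thesis by linarith
qed

lemma Qf_upper:
  assumes "0 \<le> B"
  shows "Qf c \<theta> B \<le> c\<^sup>2 + 2 * B"
proof -
  have "cos \<theta> * B \<le> 1 * B" by (rule mult_right_mono) (use assms in auto)
  moreover have "(Dco c \<theta>)\<^sup>2 * B\<^sup>2 \<ge> 0" by simp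
  ultimately show ?thesis unfolding Qf_def by linarith
qed


lemma cont_phiRHS: "continuous_on UNIV (phiRHS l1 l2 c \<theta>)"
  unfolding phiRHS_def Bang_def by (intro continuous_intros)

lemma cont_Bang: "continuous_on UNIV (Bang l1 l2)"
  unfolding Bang_def by (intro continuous_intros)

lemma Hfun_eq:
  assumes l: "0 < l2" "l2 \<le> l1" and c: "0 < c" and Qa: "Qf c \<theta> (l1\<^sup>2) > 0"
  shows "Hfun l1 l2 c \<theta> = integral {0..pi} (hh l1 l2 c \<theta>)"
proof -
  define F where "F = phiRHS l1 l2 c \<theta>"
  define Bx where "Bx = Bang l1 l2"
  define D where "D = Dco c \<theta>"
  define m where "m = sqrt (min (c\<^sup>2) (Qf c \<theta> (l1\<^sup>2)))"
  define M where "M = sqrt (c\<^sup>2 + 2 * l1\<^sup>2)"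
  have Bb: "l2\<^sup>2 \<le> Bx x" "Bx x \<le> l1\<^sup>2" for x using Bang_bounds[OF l] by (auto simp: Bx_def)
  have Bpos: "Bx x > 0" for x using Bb(1)[of x] l(1) by (smt (verit) zero_less_power2) 
  have mpos: "m > 0" using c Qa by (simp add: m_def)
  have Fm: "m \<le> F x" for x
    unfolding m_def F_def phiRHS_Qf
    by (rule real_sqrt_le_mono, rule Qf_lower) (use c l Bb[of x] Bpos[of x] in \<open>auto simp: Bx_def\<close>)
  have FM: "F x \<le> M" for x
    unfolding M_def F_def phiRHS_Qf
    by (rule real_sqrt_le_mono, rule order_trans[OF Qf_upper]) (use Bb[of x] Bpos[of x] in \<open>auto simp: Bx_def less_imp_le\<close>)
  have Fpos: "F x > 0" for x using Fm[of x] mpos by linarith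
  have contF: "continuous_on UNIV F" unfolding F_def by (rule cont_phiRHS)
  have contB: "continuous_on UNIV Bx" unfolding Bx_def by (rule cont_Bang)
  obtain T \<phi> where T0: "T 0 = 0" and dT: "\<And>x. (T has_real_derivative 1 / F x) (at x)"
    and PT: "\<And>x. \<phi> (T x) = x" and TP: "\<And>u. T (\<phi> u) = u"
    and dP: "\<And>u. (\<phi> has_real_derivative F (\<phi> u)) (at u)"
    and uniq: "\<And>\<psi>. \<psi> 0 = 0 \<Longrightarrow> (\<forall>u. (\<psi> has_real_derivative F (\<psi> u)) (at u)) \<Longrightarrow> \<psi> = \<phi>"
    and smT: "strict_mono T"
    by (rule ode_solve[OF contF mpos Fm FM]) (rule that)
  have P0: "\<phi> 0 = 0" using PT[of 0] T0 by simp
  have phi_eq: "phi l1 l2 c \<theta> = \<phi>"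
    unfolding phi_def F_def[symmetric]
  proof (rule the_equality)
    show "\<phi> 0 = 0 \<and> (\<forall>u. (\<phi> has_real_derivative F (\<phi> u)) (at u))" using P0 dP by blast
    fix \<psi> assume "\<psi> 0 = 0 \<and> (\<forall>u. (\<psi> has_real_derivative F (\<psi> u)) (at u))"
    then show "\<psi> = \<phi>" using uniq by blast
  qed
  have Bfun_eq: "Bfun l1 l2 c \<theta> u = Bx (\<phi> u)" for u
    by (simp add: Bfun_def phi_eq Bx_def)
  have Tpi: "T pi > 0" using smT T0 strict_monoD[OF smT, of 0 pi] by simp
  have U_eq: "Uend l1 l2 c \<theta> = T pi"
    unfolding Uend_def phi_eq
  proof (rule the_equality)
    show "0 < T pi \<and> \<phi> (T pi) = pi" using Tpi PT by simp
    fix U assume "0 < U \<and> \<phi> U = pi"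
    then show "U = T pi" using TP by metis
  qed
  have contBF: "continuous_on UNIV (\<lambda>x. Bx x / F x)"
    by (intro continuous_intros contB contF) (use Fpos in \<open>auto simp: less_imp_neq[symmetric]\<close>)
  obtain P where P0': "P 0 = 0" and dPP: "\<And>x. (P has_real_derivative Bx x / F x) (at x)"
    using global_antideriv[OF contBF] by blast
  have dfP: "((\<lambda>u. D * P (\<phi> u)) has_real_derivative D * Bfun l1 l2 c \<theta> u) (at u)" for u
  proof -
    have "((\<lambda>u. P (\<phi> u)) has_real_derivative Bx (\<phi> u) / F (\<phi> u) * F (\<phi> u)) (at u)"
      by (rule DERIV_chain2[OF dPP dP])
    then have "((\<lambda>u. P (\<phi> u)) has_real_derivative Bfun l1 l2 c \<theta> u) (at u)"
      using Fpos[of "\<phi> u"] by (simp add: Bfun_eq)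
    then show ?thesis by (intro derivative_eq_intros) auto
  qed
  have f_eq: "ffun l1 l2 c \<theta> = (\<lambda>u. D * P (\<phi> u))"
    unfolding ffun_def D_def[symmetric]
  proof (rule the_equality)
    show "D * P (\<phi> 0) = 0 \<and> (\<forall>u. ((\<lambda>u. D * P (\<phi> u)) has_real_derivative D * Bfun l1 l2 c \<theta> u) (at u))"
      using P0 P0' dfP by simp
  next
    fix f assume f: "f 0 = 0 \<and> (\<forall>u. (f has_real_derivative D * Bfun l1 l2 c \<theta> u) (at u))"
    show "f = (\<lambda>u. D * P (\<phi> u))"
    proof
      fix u
      have "\<forall>x. ((\<lambda>u. f u - D * P (\<phi> u)) has_real_derivative 0) (at x)"
      proof
        fix x
        show "((\<lambda>u. f u - D * P (\<phi> u)) has_real_derivative 0) (at x)"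
          using DERIV_diff[OF conjunct2[OF f, rule_format, of x] dfP[of x]] by simp
      qed
      then have "f u - D * P (\<phi> u) = f 0 - D * P (\<phi> 0)" by (rule DERIV_isconst_all)
      then show "f u = D * P (\<phi> u)" using f P0 P0' by simp
    qed
  qed
  have fU: "ffun l1 l2 c \<theta> (Uend l1 l2 c \<theta>) = D * integral {0..pi} (\<lambda>x. Bx x / F x)"
    using ftc_real[of 0 pi P, OF _ dPP] P0' by (simp add: f_eq U_eq PT)
  define k where "k x = (c - F x) / Bx x" for x
  have contk: "continuous_on UNIV (\<lambda>x. k x / F x)"
    unfolding k_def
    by (intro continuous_intros contB contF) (use Fpos Bpos in \<open>auto simp: less_imp_neq[symmetric]\<close>)
  obtain K where K0: "K 0 = 0" and dK: "\<And>x. (K has_real_derivative k x / F x) (at x)"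
    using global_antideriv[OF contk] by blast
  have dKP: "((\<lambda>u. K (\<phi> u)) has_real_derivative k (\<phi> u)) (at u)" for u
  proof -
    have "((\<lambda>u. K (\<phi> u)) has_real_derivative k (\<phi> u) / F (\<phi> u) * F (\<phi> u)) (at u)"
      by (rule DERIV_chain2[OF dK dP])
    then show ?thesis using Fpos[of "\<phi> u"] by simp
  qed
  have Gint: "(\<lambda>s. (c - deriv (phi l1 l2 c \<theta>) s) / Bfun l1 l2 c \<theta> s) = (\<lambda>s. k (\<phi> s))"
  proof
    fix s
    have "deriv \<phi> s = F (\<phi> s)" using dP by (rule DERIV_imp_deriv)
    then show "(c - deriv (phi l1 l2 c \<theta>) s) / Bfun l1 l2 c \<theta> s = k (\<phi> s)"
      by (simp add: phi_eq Bfun_eq k_def)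
  qed
  have GU: "Gfun l1 l2 c \<theta> (Uend l1 l2 c \<theta>) = integral {0..pi} (\<lambda>x. k x / F x)"
  proof -
    have "Gfun l1 l2 c \<theta> (Uend l1 l2 c \<theta>) = K (\<phi> (T pi)) - K (\<phi> 0)"
      unfolding Gfun_def Gint U_eq using ftc_real[of 0 "T pi" "\<lambda>u. K (\<phi> u)", OF _ dKP] Tpi by simp
    also have "\<dots> = K pi" using PT P0 K0 by simp
    also have "\<dots> = integral {0..pi} (\<lambda>x. k x / F x)" using ftc_real[of 0 pi K, OF _ dK] K0 by simp
    finally show ?thesis .
  qed
  have i1: "(\<lambda>x. D * (D * (Bx x / F x))) integrable_on {0..pi}"
    by (intro integrable_continuous_real continuous_intros continuous_on_subset[OF contBF]) auto
  have i2: "(\<lambda>x. c * (k x / F x)) integrable_on {0..pi}"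
    by (intro integrable_continuous_real continuous_intros continuous_on_subset[OF contk]) auto
  have hh_eq: "hh l1 l2 c \<theta> = (\<lambda>x. D * (D * (Bx x / F x)) + c * (k x / F x))"
    by (auto simp: hh_def D_def Bx_def F_def k_def)
  show ?thesis
    unfolding Hfun_def fU GU hh_eq integral_add[OF i1 i2] D_def[symmetric] integral_mult_right
    by (rule refl)
qed


lemma Qf_a_eq:
  assumes "c \<noteq> 0"
  shows "Qf c \<theta> a = ((c\<^sup>2 + a * cos \<theta>)\<^sup>2 - a\<^sup>2) / c\<^sup>2"
proof -
  have s: "(sin \<theta>)\<^sup>2 = 1 - (cos \<theta>)\<^sup>2" by (simp add: sin_squared_eq)
  have "(Dco c \<theta>)\<^sup>2 * a\<^sup>2 = (1 - (cos \<theta>)\<^sup>2) * a\<^sup>2 / c\<^sup>2"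
    by (simp add: Dco_def power_divide s)
  then have "Qf c \<theta> a = c\<^sup>2 + 2 * cos \<theta> * a - (1 - (cos \<theta>)\<^sup>2) * a\<^sup>2 / c\<^sup>2"
    by (simp add: Qf_def)
  also have "\<dots> = ((c\<^sup>2 + a * cos \<theta>)\<^sup>2 - a\<^sup>2) / c\<^sup>2"
    using assms by (simp add: field_simps power2_eq_square)
  finally show ?thesis .
qed

lemma Qf_pos_lt:
  assumes l1: "0 < l1" and c: "0 < c" and th: "0 \<le> \<theta>" "\<theta> < theta_plus l1 c" "\<theta> \<le> pi"
  shows "Qf c \<theta> (l1\<^sup>2) > 0"
proof -
  define a where "a = l1\<^sup>2"
  have a: "a > 0" using l1 by (simp add: a_def)
  have cosgt: "cos \<theta> > 1 - c\<^sup>2 / a"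
  proof (cases "c > sqrt 2 * l1")
    case True
    then have "c\<^sup>2 > (sqrt 2 * l1)\<^sup>2" using l1 by (intro power_strict_mono) auto
    then have "c\<^sup>2 > 2 * a" by (simp add: a_def power_mult_distrib)
    then have "c\<^sup>2 / a > 2" using a by (simp add: field_simps)
    moreover have "cos \<theta> \<ge> -1" by simp
    ultimately show ?thesis by linarith
  next
    case False
    have "c\<^sup>2 \<le> (sqrt 2 * l1)\<^sup>2" using False c by (intro power_mono) auto
    then have "c\<^sup>2 \<le> 2 * a" by (simp add: a_def power_mult_distrib)
    then have le2: "c\<^sup>2 / a \<le> 2" using a by (simp add: field_simps)
    have pos: "c\<^sup>2 / a > 0" using a c by simp
    define y where "y = 1 - c\<^sup>2 / a"
    have y: "-1 \<le> y" "y \<le> 1" using le2 pos by (auto simp: y_def)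
    have "\<theta> < arccos y" using th(2) False by (simp add: theta_plus_def y_def a_def)
    moreover have "arccos y \<le> pi" using arccos_bounded[OF y] by simp
    ultimately have "cos (arccos y) < cos \<theta>" using th(1) by (intro cos_monotone_0_pi) auto
    then show ?thesis using y by (simp add: y_def)
  qed
  have "c\<^sup>2 + a * cos \<theta> > a"
  proof -
    have "a * cos \<theta> > a * (1 - c\<^sup>2 / a)" using cosgt a by simp
    also have "a * (1 - c\<^sup>2 / a) = a - c\<^sup>2" using a by (simp add: field_simps)
    finally show ?thesis by simp
  qed
  then have "(c\<^sup>2 + a * cos \<theta>)\<^sup>2 > a\<^sup>2" using a by (intro power_strict_mono) auto
  then show ?thesis using Qf_a_eq[of c \<theta> a] c by (simp add: a_def[symmetric])
qed

lemma Qf_decr: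
  assumes c: "0 < c" and th: "0 \<le> \<theta>1" "\<theta>1 < \<theta>2" "\<theta>2 \<le> pi/2" and B: "B > 0"
  shows "Qf c \<theta>2 B < Qf c \<theta>1 B"
proof -
  have "cos \<theta>2 < cos \<theta>1" using th by (intro cos_monotone_0_pi) auto
  then have 1: "2 * cos \<theta>2 * B < 2 * cos \<theta>1 * B" using B by simp
  have "sin \<theta>1 \<le> sin \<theta>2" using th by (intro sin_monotone_2pi_le) auto
  moreover have "0 \<le> sin \<theta>1" using th by (intro sin_ge_zero) auto
  ultimately have "(sin \<theta>1)\<^sup>2 \<le> (sin \<theta>2)\<^sup>2" by (intro power_mono) auto
  then have "(Dco c \<theta>1)\<^sup>2 \<le> (Dco c \<theta>2)\<^sup>2" using c by (simp add: Dco_def power_divide divide_right_mono)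
  then have 2: "(Dco c \<theta>1)\<^sup>2 * B\<^sup>2 \<le> (Dco c \<theta>2)\<^sup>2 * B\<^sup>2" by (intro mult_right_mono) auto
  show ?thesis using 1 2 unfolding Qf_def by linarith
qed

lemma phiRHS_pos:
  assumes l: "0 < l2" "l2 \<le> l1" and c: "0 < c" and Qa: "Qf c \<theta> (l1\<^sup>2) > 0"
  shows "phiRHS l1 l2 c \<theta> x > 0" "Bang l1 l2 x > 0" "Qf c \<theta> (Bang l1 l2 x) > 0"
proof -
  have Bb: "l2\<^sup>2 \<le> Bang l1 l2 x" "Bang l1 l2 x \<le> l1\<^sup>2" using Bang_bounds[OF l] by auto
  show Bp: "Bang l1 l2 x > 0" using Bb(1) l(1) by (smt (verit) zero_less_power2)
  have "Qf c \<theta> (Bang l1 l2 x) \<ge> min (c\<^sup>2) (Qf c \<theta> (l1\<^sup>2))"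
    by (rule Qf_lower) (use c l Bb Bp in auto)
  moreover have "min (c\<^sup>2) (Qf c \<theta> (l1\<^sup>2)) > 0" using c Qa by simp
  ultimately show Qp: "Qf c \<theta> (Bang l1 l2 x) > 0" by linarith
  show "phiRHS l1 l2 c \<theta> x > 0" unfolding phiRHS_Qf using Qp by simp
qed

lemma hh_form:
  assumes "Bang l1 l2 x > 0" "phiRHS l1 l2 c \<theta> x > 0"
  shows "hh l1 l2 c \<theta> x = ((Dco c \<theta>)\<^sup>2 * (Bang l1 l2 x)\<^sup>2 + c\<^sup>2) / (Bang l1 l2 x * phiRHS l1 l2 c \<theta> x)
            - c / Bang l1 l2 x"
  using assms unfolding hh_def by (simp add: field_simps power2_eq_square)

lemma hh_mono:
  assumes l: "0 < l2" "l2 \<le> l1" and c: "0 < c" and th: "0 \<le> \<theta>1" "\<theta>1 < \<theta>2" "\<theta>2 \<le> pi/2"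
    and Q2: "Qf c \<theta>2 (l1\<^sup>2) > 0"
  shows "hh l1 l2 c \<theta>1 x < hh l1 l2 c \<theta>2 x"
proof -
  have "Qf c \<theta>2 (l1\<^sup>2) < Qf c \<theta>1 (l1\<^sup>2)" by (rule Qf_decr) (use c th l in auto)
  then have Q1: "Qf c \<theta>1 (l1\<^sup>2) > 0" using Q2 by linarith
  define B where "B = Bang l1 l2 x"
  define F1 where "F1 = phiRHS l1 l2 c \<theta>1 x"
  define F2 where "F2 = phiRHS l1 l2 c \<theta>2 x"
  have Bp: "B > 0" using phiRHS_pos[OF l c Q1] by (simp add: B_def)
  have F1p: "F1 > 0" using phiRHS_pos[OF l c Q1] by (simp add: F1_def)
  have F2p: "F2 > 0" using phiRHS_pos[OF l c Q2] by (simp add: F2_def)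
  have "Qf c \<theta>2 B < Qf c \<theta>1 B" by (rule Qf_decr) (use c th Bp in auto)
  then have F21: "F2 < F1" unfolding F1_def F2_def phiRHS_Qf B_def by simp
  have "sin \<theta>1 \<le> sin \<theta>2" using th by (intro sin_monotone_2pi_le) auto
  moreover have "0 \<le> sin \<theta>1" using th by (intro sin_ge_zero) auto
  ultimately have "(sin \<theta>1)\<^sup>2 \<le> (sin \<theta>2)\<^sup>2" by (intro power_mono) auto
  then have "(Dco c \<theta>1)\<^sup>2 \<le> (Dco c \<theta>2)\<^sup>2" using c by (simp add: Dco_def power_divide divide_right_mono)
  then have N: "(Dco c \<theta>1)\<^sup>2 * B\<^sup>2 + c\<^sup>2 \<le> (Dco c \<theta>2)\<^sup>2 * B\<^sup>2 + c\<^sup>2" by (intro add_right_mono mult_right_mono) auto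
  have N1p: "(Dco c \<theta>1)\<^sup>2 * B\<^sup>2 + c\<^sup>2 > 0" using c by (smt (verit) zero_le_power2 zero_less_power2 mult_nonneg_nonneg)
  have "((Dco c \<theta>1)\<^sup>2 * B\<^sup>2 + c\<^sup>2) / (B * F1) < ((Dco c \<theta>1)\<^sup>2 * B\<^sup>2 + c\<^sup>2) / (B * F2)"
    by (rule divide_strict_left_mono[OF _ N1p]) (use Bp F1p F2p F21 in auto)
  also have "\<dots> \<le> ((Dco c \<theta>2)\<^sup>2 * B\<^sup>2 + c\<^sup>2) / (B * F2)"
    by (rule divide_right_mono[OF N]) (use Bp F2p in auto)
  finally show ?thesis
    using hh_form[of l1 l2 x c \<theta>1] hh_form[of l1 l2 x c \<theta>2] Bp F1p F2p
    unfolding B_def F1_def F2_def by linarith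
qed

lemma cont_hh:
  assumes l: "0 < l2" "l2 \<le> l1" and c: "0 < c" and Qa: "Qf c \<theta> (l1\<^sup>2) > 0"
  shows "continuous_on UNIV (hh l1 l2 c \<theta>)"
proof -
  have ne: "phiRHS l1 l2 c \<theta> x \<noteq> 0" "Bang l1 l2 x \<noteq> 0" for x
    using phiRHS_pos[OF l c Qa, of x] by auto
  show ?thesis unfolding hh_def
    by (intro continuous_intros cont_phiRHS cont_Bang) (use ne in auto)
qed

lemma J_strict:
  assumes l: "0 < l2" "l2 \<le> l1" and c: "0 < c" and th: "0 \<le> \<theta>1" "\<theta>1 < \<theta>2" "\<theta>2 \<le> pi/2"
    and Q2: "Qf c \<theta>2 (l1\<^sup>2) > 0"
  shows "integral {0..pi} (hh l1 l2 c \<theta>1) < integral {0..pi} (hh l1 l2 c \<theta>2)"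
proof -
  have "Qf c \<theta>2 (l1\<^sup>2) < Qf c \<theta>1 (l1\<^sup>2)" by (rule Qf_decr) (use c th l in auto)
  then have Q1: "Qf c \<theta>1 (l1\<^sup>2) > 0" using Q2 by linarith
  show ?thesis
    apply (rule integral_less_real)
    using continuous_on_subset[OF cont_hh[OF l c Q1]] continuous_on_subset[OF cont_hh[OF l c Q2]]
           hh_mono[OF l c th Q2] apply auto using pi_gt_zero by linarith
qed


lemma cont2_phiRHS [continuous_intros]:
  fixes S :: "(real \<times> real) set"
  shows "continuous_on S (\<lambda>p. phiRHS l1 l2 c (fst p) (snd p))"
  unfolding phiRHS_def Bang_def Dco_def divide_inverse by (intro continuous_intros)

lemma cont2_Bang [continuous_intros]:
  fixes S :: "(real \<times> real) set"
  shows "continuous_on S (\<lambda>p. Bang l1 l2 (snd p))"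
  unfolding Bang_def by (intro continuous_intros)

lemma cont2_Dco [continuous_intros]:
  fixes S :: "(real \<times> real) set"
  shows "continuous_on S (\<lambda>p. Dco c (fst p))"
  unfolding Dco_def divide_inverse by (intro continuous_intros)

lemma J_cont:
  assumes l: "0 < l2" "l2 \<le> l1" and c: "0 < c" and Qa: "\<And>\<theta>. \<theta> \<in> S \<Longrightarrow> Qf c \<theta> (l1\<^sup>2) > 0"
  shows "continuous_on S (\<lambda>\<theta>. integral {0..pi} (hh l1 l2 c \<theta>))"
proof -
  have ne: "phiRHS l1 l2 c (fst p) (snd p) \<noteq> 0" "Bang l1 l2 (snd p) \<noteq> 0" if "p \<in> S \<times> cbox 0 pi" for p
    using phiRHS_pos[OF l c Qa[of "fst p"], of "snd p"] that by auto
  have e: "(\<lambda>(\<theta>, x). hh l1 l2 c \<theta> x) = (\<lambda>p. hh l1 l2 c (fst p) (snd p))" by auto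
  have "continuous_on (S \<times> cbox 0 pi) (\<lambda>(\<theta>, x). hh l1 l2 c \<theta> x)"
    unfolding e unfolding hh_def by (intro continuous_intros) (use ne in auto)
  from integral_continuous_on_param[OF this] show ?thesis by simp
qed

lemma J0_neg:
  assumes l: "0 < l2" "l2 \<le> l1" and c: "0 < c"
  shows "integral {0..pi} (hh l1 l2 c 0) < 0"
proof -
  have Qa: "Qf c 0 (l1\<^sup>2) > 0" using c by (simp add: Qf_def Dco_def add_pos_nonneg)
  have neg: "hh l1 l2 c 0 x < 0" for x
  proof -
    define B where "B = Bang l1 l2 x"
    have Bp: "B > 0" using phiRHS_pos[OF l c Qa] by (simp add: B_def)
    have F: "phiRHS l1 l2 c 0 x = sqrt (c\<^sup>2 + 2 * B)" by (simp add: phiRHS_def Dco_def B_def)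
    have "sqrt (c\<^sup>2) < sqrt (c\<^sup>2 + 2 * B)" using Bp by (intro real_sqrt_less_mono) simp
    then have Fc: "c < sqrt (c\<^sup>2 + 2 * B)" using c by simp
    have "(c - sqrt (c\<^sup>2 + 2 * B)) / B / sqrt (c\<^sup>2 + 2 * B) < 0"
      using Fc Bp c by (intro divide_neg_pos) (auto simp: add_pos_pos)
    then have "c * ((c - sqrt (c\<^sup>2 + 2 * B)) / B / sqrt (c\<^sup>2 + 2 * B)) < 0"
      by (rule mult_pos_neg[OF c])
    then show ?thesis by (simp add: hh_def F B_def[symmetric] Dco_def)
  qed
  have "integral {0..pi} (hh l1 l2 c 0) < integral {0..pi} (\<lambda>x. 0)"
    apply (rule integral_less_real)
    using continuous_on_subset[OF cont_hh[OF l c Qa]] neg apply auto using pi_gt_zero by linarith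
  then show ?thesis by simp
qed

lemma Jpi2_pos:
  assumes l: "0 < l2" "l2 \<le> l1" and c: "l1 < c"
  shows "Qf c (pi/2) (l1\<^sup>2) > 0" "integral {0..pi} (hh l1 l2 c (pi/2)) > 0"
proof -
  have c0: "c > 0" using l c by linarith
  have D: "Dco c (pi/2) = 1 / c" by (simp add: Dco_def)
  have Q: "Qf c (pi/2) B = c\<^sup>2 - B\<^sup>2 / c\<^sup>2" for B
    by (simp add: Qf_def D power_divide)
  have "l1\<^sup>2 < c\<^sup>2" using l c by (intro power_strict_mono) auto
  then have "(l1\<^sup>2)\<^sup>2 < (c\<^sup>2)\<^sup>2" by (rule power_strict_mono) auto
  then have "(l1\<^sup>2)\<^sup>2 / c\<^sup>2 < c\<^sup>2" using c0 by (simp add: field_simps power2_eq_square)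
  then show Qa: "Qf c (pi/2) (l1\<^sup>2) > 0" unfolding Q by simp
  have pos: "0 < hh l1 l2 c (pi/2) x" for x
  proof -
    define B where "B = Bang l1 l2 x"
    define F where "F = phiRHS l1 l2 c (pi/2) x"
    have Bp: "B > 0" using phiRHS_pos[OF l c0 Qa] by (simp add: B_def)
    have Fp: "F > 0" using phiRHS_pos[OF l c0 Qa] by (simp add: F_def)
    have "F = sqrt (c\<^sup>2 - B\<^sup>2 / c\<^sup>2)" by (simp add: F_def phiRHS_Qf Q B_def)
    also have "\<dots> \<le> sqrt (c\<^sup>2)" by (rule real_sqrt_le_mono) simp
    finally have "F \<le> c" using c0 by simp
    then have t2: "c * ((c - F) / B / F) \<ge> 0" using Bp Fp c0 by simp
    have t1: "1 / c * (1 / c * (B / F)) > 0" using Bp Fp c0 by simp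
    show ?thesis using t1 t2 unfolding hh_def D B_def[symmetric] F_def[symmetric] by linarith
  qed
  have "integral {0..pi} (\<lambda>x. 0) < integral {0..pi} (hh l1 l2 c (pi/2))"
    apply (rule integral_less_real)
    using continuous_on_subset[OF cont_hh[OF l c0 Qa]] pos apply auto using pi_gt_zero by linarith
  then show "integral {0..pi} (hh l1 l2 c (pi/2)) > 0" by simp
qed


lemma ftc_real2:
  fixes P p :: "real \<Rightarrow> real"
  assumes "a \<le> b" "\<And>x. x \<in> {a..b} \<Longrightarrow> (P has_real_derivative p x) (at x)"
  shows "integral {a..b} p = P b - P a"
proof -
  have "(p has_integral (P b - P a)) {a..b}"
    by (rule fundamental_theorem_of_calculus[OF assms(1)])
      (use assms(2) in \<open>auto simp: has_real_derivative_iff_has_vector_derivative[symmetric]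
          intro: has_field_derivative_at_within\<close>)
  then show ?thesis by (rule integral_unique)
qed

lemma Qf_upper2:
  assumes c: "0 < c" and cs: "0 \<le> cos \<theta>" and B: "0 \<le> B" "B \<le> a"
  shows "Qf c \<theta> B \<le> Qf c \<theta> a + 2 * a * (a - B) / c\<^sup>2"
proof -
  have D: "(Dco c \<theta>)\<^sup>2 \<le> 1 / c\<^sup>2"
  proof -
    have "(sin \<theta>)\<^sup>2 \<le> 1" by (simp add: abs_square_le_1)
    then show ?thesis using c by (simp add: Dco_def power_divide divide_right_mono)
  qed
  have "Qf c \<theta> a - Qf c \<theta> B = 2 * cos \<theta> * (a - B) - (Dco c \<theta>)\<^sup>2 * ((a - B) * (a + B))"
    by (simp add: Qf_def algebra_simps power2_eq_square)
  moreover have "2 * cos \<theta> * (a - B) \<ge> 0" using cs B by simp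
  moreover have "(Dco c \<theta>)\<^sup>2 * ((a - B) * (a + B)) \<le> 1 / c\<^sup>2 * ((a - B) * (2 * a))"
    by (rule mult_mono[OF D]) (use B in \<open>auto intro!: mult_left_mono\<close>)
  moreover have "1 / c\<^sup>2 * ((a - B) * (2 * a)) = 2 * a * (a - B) / c\<^sup>2" by simp
  ultimately show ?thesis by linarith
qed

lemma a_minus_Bang:
  assumes l: "0 < l2" "l2 \<le> l1"
  shows "l1\<^sup>2 - Bang l1 l2 x \<le> l1\<^sup>2 * x\<^sup>2"
proof -
  have e: "l1\<^sup>2 - Bang l1 l2 x = (l1\<^sup>2 - l2\<^sup>2) * (sin x)\<^sup>2"
    by (simp add: Bang_def cos_squared_eq algebra_simps)
  have "(sin x)\<^sup>2 \<le> x\<^sup>2" using abs_sin_x_le_abs_x[of x]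
    by (metis abs_ge_zero power2_abs power_mono)
  moreover have "0 \<le> l1\<^sup>2 - l2\<^sup>2" "l1\<^sup>2 - l2\<^sup>2 \<le> l1\<^sup>2" using l by (auto simp: power_mono)
  ultimately show ?thesis unfolding e by (intro mult_mono) auto
qed


lemma J_large:
  assumes l: "0 < l2" "l2 \<le> l1" and c: "0 < c" and cs: "0 \<le> cos \<theta>"
    and Qa: "0 < Qf c \<theta> (l1\<^sup>2)" and s0: "0 < s0" "s0 < pi"
    and Qs: "Qf c \<theta> (l1\<^sup>2) \<le> (2 * (l1\<^sup>2)\<^sup>2 / c\<^sup>2) * s0\<^sup>2"
  shows "integral {0..pi} (hh l1 l2 c \<theta>) \<ge>
           c\<^sup>2 / (l1\<^sup>2 * sqrt (2 * (2 * (l1\<^sup>2)\<^sup>2 / c\<^sup>2))) * (ln pi - ln s0) - c * pi / l2\<^sup>2"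
proof -
  define a where "a = l1\<^sup>2"
  define b where "b = l2\<^sup>2"
  define M where "M = 2 * a\<^sup>2 / c\<^sup>2"
  define \<kappa> where "\<kappa> = c\<^sup>2 / (a * sqrt (2 * M))"
  have a: "a > 0" using l by (simp add: a_def)
  have b: "b > 0" using l by (simp add: b_def)
  have M: "M > 0" using a c by (simp add: M_def)
  have \<kappa>: "\<kappa> > 0" using a c M by (simp add: \<kappa>_def)
  have Qs': "Qf c \<theta> a \<le> M * s0\<^sup>2" using Qs by (simp add: a_def M_def)
  have h: "hh l1 l2 c \<theta> x \<ge> c\<^sup>2 / (a * phiRHS l1 l2 c \<theta> x) - c / b" for x
  proof -
    define B where "B = Bang l1 l2 x"
    define F where "F = phiRHS l1 l2 c \<theta> x"
    have Bp: "B > 0" "b \<le> B" "B \<le> a"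
      using phiRHS_pos[OF l c Qa] Bang_bounds[OF l] by (auto simp: B_def a_def b_def)
    have Fp: "F > 0" using phiRHS_pos[OF l c Qa] by (simp add: F_def)
    have 1: "c / B \<le> c / b" using Bp b c by (intro divide_left_mono) auto
    have "c\<^sup>2 / (a * F) \<le> c\<^sup>2 / (B * F)" using Bp Fp by (intro divide_left_mono mult_right_mono) auto
    also have "\<dots> \<le> ((Dco c \<theta>)\<^sup>2 * B\<^sup>2 + c\<^sup>2) / (B * F)"
      using Bp Fp by (intro divide_right_mono) auto
    finally have 2: "c\<^sup>2 / (a * F) \<le> ((Dco c \<theta>)\<^sup>2 * B\<^sup>2 + c\<^sup>2) / (B * F)" .
    show ?thesis using hh_form[of l1 l2 x c \<theta>] Bp Fp 1 2 unfolding B_def F_def by linarith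
  qed
  have h0: "hh l1 l2 c \<theta> x \<ge> - c / b" for x
  proof -
    have "c\<^sup>2 / (a * phiRHS l1 l2 c \<theta> x) \<ge> 0" using a phiRHS_pos[OF l c Qa, of x] by simp
    then show ?thesis using h[of x] by linarith
  qed
  have h1: "hh l1 l2 c \<theta> x \<ge> \<kappa> / x - c / b" if x: "s0 \<le> x" for x
  proof -
    define B where "B = Bang l1 l2 x"
    define F where "F = phiRHS l1 l2 c \<theta> x"
    have Bp: "B > 0" "B \<le> a"
      using phiRHS_pos[OF l c Qa] Bang_bounds[OF l] by (auto simp: B_def a_def)
    have Fp: "F > 0" using phiRHS_pos[OF l c Qa] by (simp add: F_def)
    have xp: "x > 0" using x s0 by linarith
    have "F\<^sup>2 = Qf c \<theta> B" using phiRHS_pos[OF l c Qa, of x] by (simp add: F_def B_def phiRHS_Qf)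
    also have "\<dots> \<le> Qf c \<theta> a + 2 * a * (a - B) / c\<^sup>2" by (rule Qf_upper2) (use c cs Bp in auto)
    also have "\<dots> \<le> M * s0\<^sup>2 + 2 * a * (a * x\<^sup>2) / c\<^sup>2"
    proof -
      have "a - B \<le> a * x\<^sup>2" using a_minus_Bang[OF l, of x] by (simp add: a_def B_def)
      then have "2 * a * (a - B) / c\<^sup>2 \<le> 2 * a * (a * x\<^sup>2) / c\<^sup>2"
        using a c by (intro divide_right_mono mult_left_mono) auto
      then show ?thesis using Qs' by linarith
    qed
    also have "\<dots> = M * s0\<^sup>2 + M * x\<^sup>2" by (simp add: M_def power2_eq_square)
    also have "\<dots> \<le> M * x\<^sup>2 + M * x\<^sup>2"
    proof -
      have "s0\<^sup>2 \<le> x\<^sup>2" by (rule power_mono) (use x s0 in auto)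
      then have "M * s0\<^sup>2 \<le> M * x\<^sup>2" by (rule mult_left_mono) (use M in auto)
      then show ?thesis by linarith
    qed
    also have "\<dots> = (sqrt (2 * M) * x)\<^sup>2" using M by (simp add: power_mult_distrib)
    finally have "F\<^sup>2 \<le> (sqrt (2 * M) * x)\<^sup>2" .
    then have Fle: "F \<le> sqrt (2 * M) * x"
      by (rule power2_le_imp_le) (use M xp in simp)
    have "\<kappa> / x = c\<^sup>2 / (a * (sqrt (2 * M) * x))" using xp by (simp add: \<kappa>_def)
    also have "\<dots> \<le> c\<^sup>2 / (a * F)" using Fp Fle a by (intro divide_left_mono mult_left_mono) auto
    finally show ?thesis using h[of x] by (simp add: F_def)
  qed
  have cont: "continuous_on {p..q} (hh l1 l2 c \<theta>)" for p q
    using continuous_on_subset[OF cont_hh[OF l c Qa]] by auto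
  have int: "hh l1 l2 c \<theta> integrable_on {p..q}" for p q
    by (rule integrable_continuous_real[OF cont])
  have split: "integral {0..pi} (hh l1 l2 c \<theta>) = integral {0..s0} (hh l1 l2 c \<theta>) + integral {s0..pi} (hh l1 l2 c \<theta>)"
    using Henstock_Kurzweil_Integration.integral_combine[of 0 s0 pi, OF _ _ int] s0 by simp
  have I1: "integral {0..s0} (hh l1 l2 c \<theta>) \<ge> integral {0..s0} (\<lambda>x. - c / b)"
    by (rule integral_le[OF _ int]) (use h0 in auto)
  have I1': "integral {0..s0} (\<lambda>x. - c / b) = - c / b * s0" using s0 by simp
  have cont2: "continuous_on {s0..pi} (\<lambda>x. \<kappa> / x - c / b)"
    using s0 by (intro continuous_intros) auto
  have I2: "integral {s0..pi} (hh l1 l2 c \<theta>) \<ge> integral {s0..pi} (\<lambda>x. \<kappa> / x - c / b)"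
    by (rule integral_le[OF integrable_continuous_real[OF cont2] int]) (use h1 in auto)
  have I2': "integral {s0..pi} (\<lambda>x. \<kappa> / x - c / b) = (\<kappa> * ln pi - c / b * pi) - (\<kappa> * ln s0 - c / b * s0)"
  proof (rule ftc_real2[where P = "\<lambda>x. \<kappa> * ln x - c / b * x"])
    show "s0 \<le> pi" using s0 by simp
    fix x assume "x \<in> {s0..pi}"
    then have "x > 0" using s0 by auto
    then have "((\<lambda>x. \<kappa> * ln x - c / b * x) has_real_derivative \<kappa> * inverse x - c / b * 1) (at x)"
      by (intro DERIV_diff DERIV_cmult DERIV_ln DERIV_ident)
    then show "((\<lambda>x. \<kappa> * ln x - c / b * x) has_real_derivative \<kappa> / x - c / b) (at x)"
      by (simp add: divide_inverse)
  qed
  have "integral {0..pi} (hh l1 l2 c \<theta>) \<ge> - c / b * s0 + ((\<kappa> * ln pi - c / b * pi) - (\<kappa> * ln s0 - c / b * s0))"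
    using split I1 I1' I2 I2' by linarith
  moreover have "- c / b * s0 + ((\<kappa> * ln pi - c / b * pi) - (\<kappa> * ln s0 - c / b * s0))
      = \<kappa> * (ln pi - ln s0) - c * pi / b"
    by (simp add: algebra_simps)
  ultimately show ?thesis unfolding \<kappa>_def M_def a_def b_def by linarith
qed


lemma blowup:
  assumes l: "0 < l2" "l2 \<le> l1" and c: "0 < c" "c \<le> l1"
  shows "\<exists>\<theta>1. 0 < \<theta>1 \<and> \<theta>1 < theta_plus l1 c \<and> \<theta>1 \<le> pi/2 \<and> Qf c \<theta>1 (l1\<^sup>2) > 0
           \<and> integral {0..pi} (hh l1 l2 c \<theta>1) > 0"
proof -
  define a where "a = l1\<^sup>2"
  define b where "b = l2\<^sup>2"
  define M where "M = 2 * a\<^sup>2 / c\<^sup>2"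
  define \<kappa> where "\<kappa> = c\<^sup>2 / (a * sqrt (2 * M))"
  define R where "R = c * pi / b"
  define s0 where "s0 = pi * exp (- (R / \<kappa>) - 1)"
  have a: "a > 0" using l by (simp add: a_def)
  have b: "b > 0" using l by (simp add: b_def)
  have M: "M > 0" using a c by (simp add: M_def)
  have \<kappa>: "\<kappa> > 0" using a c M by (simp add: \<kappa>_def)
  have R: "R > 0" using c b by (simp add: R_def)
  have ex: "exp (- (R / \<kappa>) - 1) < 1"
  proof -
    have "- (R / \<kappa>) - 1 < 0" using R \<kappa> by (smt (verit) divide_pos_pos)
    then show ?thesis by simp
  qed
  have s0: "0 < s0" "s0 < pi" using ex by (auto simp: s0_def)
  have lns0: "ln pi - ln s0 = R / \<kappa> + 1"
    unfolding s0_def using pi_gt_zero by (simp add: ln_mult)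
  define \<epsilon> where "\<epsilon> = M * s0\<^sup>2"
  have \<epsilon>: "\<epsilon> > 0" using M s0 by (simp add: \<epsilon>_def)
  define t where "t = min (c\<^sup>2 / (2 * a)) (\<epsilon> * c\<^sup>2 / (3 * a\<^sup>2))"
  have ca: "c\<^sup>2 \<le> a" unfolding a_def using c by (intro power_mono) auto
  have ca1: "c\<^sup>2 / a \<le> 1" "0 < c\<^sup>2 / a" using ca a c by auto
  have t: "0 < t" "t \<le> c\<^sup>2 / (2 * a)" "t \<le> \<epsilon> * c\<^sup>2 / (3 * a\<^sup>2)"
    using a c \<epsilon> by (auto simp: t_def)
  have t1: "t < c\<^sup>2 / a" using t(2) ca1 by (simp add: field_simps)
  have tle1: "t \<le> 1" using t1 ca1 by linarith
  define y1 where "y1 = 1 - c\<^sup>2 / a + t"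
  have y1: "0 \<le> y1" "y1 < 1" "-1 < y1" using ca1 t t1 by (auto simp: y1_def)
  define \<theta>1 where "\<theta>1 = arccos y1"
  have cos1: "cos \<theta>1 = y1" using y1 by (simp add: \<theta>1_def)
  have th0: "0 < \<theta>1" using arccos_lt_bounded[OF y1(3) y1(2)] by (simp add: \<theta>1_def)
  have thpi2: "\<theta>1 \<le> pi/2" using arccos_le_pi2[of y1] y1 by (simp add: \<theta>1_def)
  have "c \<le> sqrt 2 * l1"
  proof -
    have "1 \<le> sqrt 2" by simp
    then have "1 * l1 \<le> sqrt 2 * l1" using l by (intro mult_right_mono) auto
    then have "l1 \<le> sqrt 2 * l1" by simp
    then show ?thesis using c by linarith
  qed
  then have tp: "theta_plus l1 c = arccos (1 - c\<^sup>2 / a)" by (simp add: theta_plus_def a_def)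
  have thlt: "\<theta>1 < theta_plus l1 c"
    unfolding tp \<theta>1_def by (rule arccos_less_arccos) (use ca1 t y1 in \<open>auto simp: y1_def\<close>)
  have Qeq: "Qf c \<theta>1 a = a\<^sup>2 * (t * (2 + t)) / c\<^sup>2"
  proof -
    have "c\<^sup>2 + a * cos \<theta>1 = a * (1 + t)" unfolding cos1 y1_def using a by (simp add: field_simps)
    then have "(c\<^sup>2 + a * cos \<theta>1)\<^sup>2 - a\<^sup>2 = a\<^sup>2 * (t * (2 + t))" by (simp add: power2_eq_square algebra_simps)
    then show ?thesis using Qf_a_eq[of c \<theta>1 a] c by simp
  qed
  have Qpos: "Qf c \<theta>1 a > 0" unfolding Qeq using a c t by simp
  have "Qf c \<theta>1 a \<le> a\<^sup>2 * (3 * t) / c\<^sup>2"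
    unfolding Qeq using a c t tle1 by (intro divide_right_mono mult_left_mono) auto
  also have "\<dots> \<le> a\<^sup>2 * (3 * (\<epsilon> * c\<^sup>2 / (3 * a\<^sup>2))) / c\<^sup>2"
    using a c t by (intro divide_right_mono mult_left_mono) auto
  also have "\<dots> = \<epsilon>" using a c by (simp add: field_simps)
  finally have Qle: "Qf c \<theta>1 a \<le> \<epsilon>" .
  have cs: "0 \<le> cos \<theta>1" using cos1 y1 by simp
  have J: "integral {0..pi} (hh l1 l2 c \<theta>1) \<ge> \<kappa> * (ln pi - ln s0) - c * pi / b"
    using J_large[OF l c(1) cs _ s0] Qpos Qle unfolding \<kappa>_def M_def a_def b_def \<epsilon>_def by simp
  have "\<kappa> * (ln pi - ln s0) - c * pi / b = \<kappa>"
    unfolding lns0 using \<kappa> by (simp add: R_def field_simps)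
  then have "integral {0..pi} (hh l1 l2 c \<theta>1) > 0" using J \<kappa> by linarith
  then show ?thesis using th0 thlt thpi2 Qpos by (auto simp: a_def)
qed


theorem lemma5p2:
  fixes l1 l2 c :: real
  assumes "(l1 > l2 \<and> l2 > 0) \<or> (l1 = 1 \<and> l2 = 1)"
    and "c > 0"
  shows "\<exists>!\<theta>. 0 < \<theta> \<and> \<theta> < pi / 2 \<and> \<theta> < theta_plus l1 c \<and> Hfun l1 l2 c \<theta> = 0"
proof -
  have l: "0 < l2" "l2 \<le> l1" using assms(1) by auto
  have c: "0 < c" by (rule assms(2))
  have l1: "0 < l1" using l by linarith
  define J where "J \<theta> = integral {0..pi} (hh l1 l2 c \<theta>)" for \<theta>
  obtain \<theta>1 where th1: "0 < \<theta>1" "\<theta>1 \<le> pi/2" "\<theta>1 \<le> theta_plus l1 c" "Qf c \<theta>1 (l1\<^sup>2) > 0" "J \<theta>1 > 0"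
  proof (cases "c \<le> l1")
    case True
    then show ?thesis using blowup[OF l c True] that unfolding J_def by (meson less_imp_le)
  next
    case False
    then have cl: "l1 < c" by simp
    have tp2: "pi/2 \<le> theta_plus l1 c"
    proof (cases "c > sqrt 2 * l1")
      case True then show ?thesis by (simp add: theta_plus_def)
    next
      case F2: False
      have "c\<^sup>2 \<le> (sqrt 2 * l1)\<^sup>2" using F2 c by (intro power_mono) auto
      then have "c\<^sup>2 \<le> 2 * l1\<^sup>2" by (simp add: power_mult_distrib)
      then have y: "-1 \<le> 1 - c\<^sup>2 / l1\<^sup>2" using l1 by (simp add: field_simps)
      have "l1\<^sup>2 < c\<^sup>2" using cl l1 by (intro power_strict_mono) auto
      then have y0: "1 - c\<^sup>2 / l1\<^sup>2 \<le> 0" using l1 by (simp add: field_simps)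
      have "arccos 0 \<le> arccos (1 - c\<^sup>2 / l1\<^sup>2)" by (rule arccos_le_arccos) (use y y0 in auto)
      then show ?thesis using F2 by (simp add: theta_plus_def)
    qed
    show ?thesis
      apply (rule that[of "pi/2"])
      using Jpi2_pos[OF l cl] tp2 unfolding J_def by auto
  qed
  have good: "Qf c \<theta> (l1\<^sup>2) > 0" if "\<theta> \<in> {0..\<theta>1}" for \<theta>
  proof (cases "\<theta> = \<theta>1")
    case True then show ?thesis using th1 by simp
  next
    case False
    then have "Qf c \<theta>1 (l1\<^sup>2) < Qf c \<theta> (l1\<^sup>2)"
      using that th1 l1 by (intro Qf_decr c) auto
    then show ?thesis using th1 by linarith
  qed
  have contJ: "continuous_on {0..\<theta>1} J" unfolding J_def by (rule J_cont[OF l c good])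
  have J0: "J 0 < 0" unfolding J_def by (rule J0_neg[OF l c])
  obtain \<theta>s where ths: "0 \<le> \<theta>s" "\<theta>s \<le> \<theta>1" "J \<theta>s = 0"
    using IVT'[of J 0 0 \<theta>1, OF _ _ _ contJ] J0 th1 by auto
  have ths0: "\<theta>s \<noteq> 0" using ths J0 by auto
  have ths1: "\<theta>s \<noteq> \<theta>1" using ths th1 by auto
  have props: "0 < \<theta>s" "\<theta>s < pi/2" "\<theta>s < theta_plus l1 c"
    using ths ths0 ths1 th1 by auto
  have Qs: "Qf c \<theta>s (l1\<^sup>2) > 0" using good ths by auto
  have Hs: "Hfun l1 l2 c \<theta>s = 0" using Hfun_eq[OF l c Qs] ths by (simp add: J_def)
  show ?thesis
  proof (rule ex1I[of _ \<theta>s])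
    show "0 < \<theta>s \<and> \<theta>s < pi / 2 \<and> \<theta>s < theta_plus l1 c \<and> Hfun l1 l2 c \<theta>s = 0"
      using props Hs by simp
  next
    fix \<theta> assume th: "0 < \<theta> \<and> \<theta> < pi / 2 \<and> \<theta> < theta_plus l1 c \<and> Hfun l1 l2 c \<theta> = 0"
    have Q: "Qf c \<theta> (l1\<^sup>2) > 0" by (rule Qf_pos_lt[OF l1 c]) (use th in auto)
    have Jt: "J \<theta> = 0" using Hfun_eq[OF l c Q] th by (simp add: J_def)
    show "\<theta> = \<theta>s"
    proof (rule ccontr)
      assume ne: "\<theta> \<noteq> \<theta>s"
      show False
      proof (cases "\<theta> < \<theta>s")
        case True
        have "J \<theta> < J \<theta>s" unfolding J_def by (rule J_strict[OF l c _ True _ Qs]) (use th props in auto)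
        then show False using Jt ths by simp
      next
        case False
        then have lt: "\<theta>s < \<theta>" using ne by simp
        have "J \<theta>s < J \<theta>" unfolding J_def by (rule J_strict[OF l c _ lt _ Q]) (use th props in auto)
        then show False using Jt ths by simp
      qed
    qed
  qed
qed

end
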